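(* There exists a regular $K_4$-saturated graph on $n$ vertices for every positive integer $n$ satisfying $n\equiv 6 \pmod 8$, for every positive integer $n$ satisfying $n\equiv 0\pmod 8$, and for every positive integer $n$ satisfying $n\equiv 0\pmod{17}$.
   Context: All graphs are finite and simple. A graph $G$ is $K_4$-saturated if it contains no copy of the complete graph $K_4$ but adding any edge between two non-adjacent vertices creates a copy of $K_4$. A graph is regular if all vertices have the same degree. *)

theory Defs
  imports Main
begin

definition simple_graph :: "'a set \<Rightarrow> ('a \<Rightarrow> 'a \<Rightarrow> bool) \<Rightarrow> bool" where
  "simple_graph V E \<longleftrightarrow> finite V \<and> (\<forall>u v. E u v \<longrightarrow> u \<in> V \<and> v \<in> V)
     \<and> (\<forall>u v. E u v \<longrightarrow> E v u) \<and> (\<forall>v. \<not> E v v)"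

definition degree :: "'a set \<Rightarrow> ('a \<Rightarrow> 'a \<Rightarrow> bool) \<Rightarrow> 'a \<Rightarrow> nat" where
  "degree V E v = card {u \<in> V. E v u}"

definition regular :: "'a set \<Rightarrow> ('a \<Rightarrow> 'a \<Rightarrow> bool) \<Rightarrow> bool" where
  "regular V E \<longleftrightarrow> (\<exists>d. \<forall>v\<in>V. degree V E v = d)"

definition has_K4 :: "'a set \<Rightarrow> ('a \<Rightarrow> 'a \<Rightarrow> bool) \<Rightarrow> bool" where
  "has_K4 V E \<longleftrightarrow> (\<exists>S. S \<subseteq> V \<and> card S = 4 \<and> (\<forall>u\<in>S. \<forall>v\<in>S. u \<noteq> v \<longrightarrow> E u v))"

definition add_edge :: "('a \<Rightarrow> 'a \<Rightarrow> bool) \<Rightarrow> 'a \<Rightarrow> 'a \<Rightarrow> ('a \<Rightarrow> 'a \<Rightarrow> bool)" where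
  "add_edge E x y = (\<lambda>u v. E u v \<or> (u = x \<and> v = y) \<or> (u = y \<and> v = x))"

definition K4_saturated :: "'a set \<Rightarrow> ('a \<Rightarrow> 'a \<Rightarrow> bool) \<Rightarrow> bool" where
  "K4_saturated V E \<longleftrightarrow> \<not> has_K4 V E \<and>
     (\<forall>x\<in>V. \<forall>y\<in>V. x \<noteq> y \<and> \<not> E x y \<longrightarrow> has_K4 V (add_edge E x y))"

end

theory Submission
  imports Defs
begin

definition okd :: "nat \<Rightarrow> nat \<Rightarrow> nat \<Rightarrow> bool" where
  "okd A n t \<longleftrightarrow> (A \<le> t \<and> t + 1 \<le> 3*A) \<or> (n + 1 \<le> t + 3*A \<and> t + A \<le> n)"

definition cE :: "nat \<Rightarrow> nat \<Rightarrow> nat \<Rightarrow> nat \<Rightarrow> bool" where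
  "cE A n x y \<longleftrightarrow> x < n \<and> y < n \<and> okd A n (if x \<le> y then y - x else x - y)"

lemma K4_sorted:
  fixes V :: "nat set"
  assumes "has_K4 V E" "V \<subseteq> {0..<n}"
  shows "\<exists>a b c d. a<b \<and> b<c \<and> c<d \<and> d<n \<and> E a b \<and> E a c \<and> E a d \<and> E b c \<and> E b d \<and> E c d"
proof -
  obtain S where S: "S \<subseteq> V" "card S = 4" "\<forall>u\<in>S. \<forall>v\<in>S. u\<noteq>v \<longrightarrow> E u v"
    using assms unfolding has_K4_def by blast
  define l where "l = sorted_list_of_set S"
  have fin: "finite S" using S(2) by (metis card.infinite zero_neq_numeral)
  have len: "length l = 4" using S fin l_def by simp
  have sl: "sorted_wrt (<) l" by (simp add: l_def strict_sorted_list_of_set)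
  have st: "set l = S" using fin l_def by simp
  have mem: "l!i \<in> S" if "i < 4" for i using that len st nth_mem by metis
  have lt: "l!i < l!j" if "i < j" "j < 4" for i j using sorted_wrt_nth_less[OF sl] that len by simp
  have E: "E (l!i) (l!j)" if "i < j" "j < 4" for i j
    using S(3) mem[of i] mem[of j] lt[of i j] that by auto
  have "l!3 < n" using mem[of 3] S(1) assms(2) by auto
  then show ?thesis using lt E by (intro exI[of _ "l!0"] exI[of _ "l!1"] exI[of _ "l!2"] exI[of _ "l!3"]) auto
qed

lemma K4_intro:
  assumes "a \<in> V" "b \<in> V" "c \<in> V" "d \<in> V" "a\<noteq>b" "a\<noteq>c" "a\<noteq>d" "b\<noteq>c" "b\<noteq>d" "c\<noteq>d"
    "E a b" "E a c" "E a d" "E b c" "E b d" "E c d" "\<forall>u v. E u v \<longrightarrow> E v u"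
  shows "has_K4 V E"
  unfolding has_K4_def
  apply (rule exI[of _ "{a,b,c,d}"])
  using assms by auto

lemma K4_arith: "0<(g1::nat) \<Longrightarrow> 0<g2 \<Longrightarrow> 0<g3 \<Longrightarrow> 1 \<le> A \<Longrightarrow> 8*A \<le> n+2 \<Longrightarrow> g1+g2+g3<n \<Longrightarrow>
  okd A n g1 \<Longrightarrow> okd A n g2 \<Longrightarrow> okd A n g3 \<Longrightarrow> okd A n (g1+g2) \<Longrightarrow> okd A n (g2+g3) \<Longrightarrow> okd A n (g1+g2+g3) \<Longrightarrow> False"
  unfolding okd_def by (elim conjE disjE; linarith)

lemma cE_K4free:
  assumes "1 \<le> A" "8*A \<le> n+2" "n+3 \<le> 10*A"
  shows "\<not> has_K4 {0..<n} (cE A n)"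
proof
  assume "has_K4 {0..<n} (cE A n)"
  then obtain a b c d where H: "a<b" "b<c" "c<d" "d<n" "cE A n a b" "cE A n a c" "cE A n a d" "cE A n b c" "cE A n b d" "cE A n c d"
    using K4_sorted[of "{0..<n}" "cE A n" n] by auto
  have ce: "okd A n (y - x)" if "cE A n x y" "x < y" for x y using that unfolding cE_def by simp
  have o: "okd A n (b-a)" "okd A n (c-a)" "okd A n (d-a)" "okd A n (c-b)" "okd A n (d-b)" "okd A n (d-c)"
    using ce[OF H(5) H(1)] ce[OF H(6)] ce[OF H(7)] ce[OF H(8) H(2)] ce[OF H(9)] ce[OF H(10) H(3)] H(1-3) by simp_all
  obtain g1 g2 g3 where g: "b = a+g1" "c = a+g1+g2" "d = a+g1+g2+g3" "0<g1" "0<g2" "0<g3"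
    using H(1-3) by (metis less_imp_add_positive add.commute)
  have o2: "okd A n g1" "okd A n (g1+g2)" "okd A n (g1+g2+g3)" "okd A n g2" "okd A n (g2+g3)" "okd A n g3"
    using o unfolding g by (simp_all add: add.assoc)
  have s: "g1+g2+g3 < n" using g H(4) by simp
  show False by (rule K4_arith[OF g(4-6) assms(1,2) s o2(1) o2(4) o2(6) o2(2) o2(5) o2(3)])
qed

lemma mod_if_lt: "(u::nat) < n \<Longrightarrow> k < n \<Longrightarrow> (u+k) mod n = (if u+k<n then u+k else u+k-n)"
  by (simp add: le_mod_geq)

lemma okd_sym: "t \<le> n \<Longrightarrow> okd A n (n-t) = okd A n t"
  unfolding okd_def by arith

lemma cE_rt:
  assumes "k<n" "u<n" "v<n"
  shows "cE A n ((u+k) mod n) ((v+k) mod n) = cE A n u v"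
proof -
  define t where "t = (if u \<le> v then v-u else u-v)"
  define D where "D = (if (u+k) mod n \<le> (v+k) mod n then (v+k) mod n - (u+k) mod n else (u+k) mod n - (v+k) mod n)"
  have d: "D = t \<or> D = n - t"
    using assms unfolding D_def t_def by (simp add: mod_if_lt) arith
  have "t \<le> n" using assms unfolding t_def by arith
  then have "okd A n D = okd A n t" using d okd_sym by metis
  then show ?thesis using assms unfolding cE_def D_def[symmetric] t_def[symmetric] by simp
qed

lemma cE_S: "u<v \<Longrightarrow> v<n \<Longrightarrow> u+A \<le> v \<Longrightarrow> v+1 \<le> u+3*A \<Longrightarrow> cE A n u v"
  unfolding cE_def okd_def by (intro conjI disjI1) (simp_all add: less_imp_le)
lemma cE_L: "u<v \<Longrightarrow> v<n \<Longrightarrow> u+n+1 \<le> v+3*A \<Longrightarrow> v+A \<le> u+n \<Longrightarrow> cE A n u v"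
  unfolding cE_def okd_def by (intro conjI disjI2) (simp_all add: less_imp_le)
lemma cE_sym: "cE A n u v = cE A n v u"
  unfolding cE_def by (cases u v rule: linorder_cases) auto

lemma sat0:
  assumes "1\<le>A" "8*A \<le> n+2" "n+3 \<le> 10*A" "0<d" "d<n" "\<not> okd A n d"
  shows "\<exists>z w. z<n \<and> w<n \<and> z\<noteq>0 \<and> z\<noteq>d \<and> w\<noteq>0 \<and> w\<noteq>d \<and> z\<noteq>w \<and> cE A n 0 z \<and> cE A n d z \<and> cE A n 0 w \<and> cE A n d w \<and> cE A n z w"
proof -
  note a = assms(1-5)
  define m where "m = n - 3*A"
  have m: "n = m + 3*A" using a unfolding m_def by arith
  have c0: ?thesis if h: "d<A"
  proof -
    have f0: "cE A n (0) (d+A)" by (rule cE_S) (use a h m in linarith)+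
    have f1: "cE A n (d) (d+A)" by (rule cE_S) (use a h m in linarith)+
    have f2: "cE A n (0) (d+2*A)" by (rule cE_S) (use a h m in linarith)+
    have f3: "cE A n (d) (d+2*A)" by (rule cE_S) (use a h m in linarith)+
    have f4: "cE A n (d+A) (d+2*A)" by (rule cE_S) (use a h m in linarith)+
    have b0: "d+A<n" using a h m by linarith
    have b1: "d+2*A<n" using a h m by linarith
    have b2: "d+A\<noteq>0" using a h m by linarith
    have b3: "d+A\<noteq>d" using a h m by linarith
    have b4: "d+2*A\<noteq>0" using a h m by linarith
    have b5: "d+2*A\<noteq>d" using a h m by linarith
    have b6: "d+A\<noteq>d+2*A" using a h m by linarith
    show ?thesis using b0 b1 b2 b3 b4 b5 b6 f0 f1 f2 f3 f4 by (intro exI[of _ "d+A"] exI[of _ "d+2*A"] conjI) (assumption+)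
  qed
  have c1: ?thesis if h: "n<d+A"
  proof -
    have f0: "cE A n (0) (A)" by (rule cE_S) (use a h m in linarith)+
    have f1: "cE A n (d) (A)" by (subst cE_sym, rule cE_L) (use a h m in linarith)+
    have f2: "cE A n (0) (2*A)" by (rule cE_S) (use a h m in linarith)+
    have f3: "cE A n (d) (2*A)" by (subst cE_sym, rule cE_L) (use a h m in linarith)+
    have f4: "cE A n (A) (2*A)" by (rule cE_S) (use a h m in linarith)+
    have b0: "A<n" using a h m by linarith
    have b1: "2*A<n" using a h m by linarith
    have b2: "A\<noteq>0" using a h m by linarith
    have b3: "A\<noteq>d" using a h m by linarith
    have b4: "2*A\<noteq>0" using a h m by linarith
    have b5: "2*A\<noteq>d" using a h m by linarith
    have b6: "A\<noteq>2*A" using a h m by linarith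
    show ?thesis using b0 b1 b2 b3 b4 b5 b6 f0 f1 f2 f3 f4 by (intro exI[of _ "A"] exI[of _ "2*A"] conjI) (assumption+)
  qed
  have c2: ?thesis if h: "3*A \<le> d \<and> d<4*A"
  proof -
    have f0: "cE A n (0) (A)" by (rule cE_S) (use a h m in linarith)+
    have f1: "cE A n (d) (A)" by (subst cE_sym, rule cE_S) (use a h m in linarith)+
    have f2: "cE A n (0) (2*A)" by (rule cE_S) (use a h m in linarith)+
    have f3: "cE A n (d) (2*A)" by (subst cE_sym, rule cE_S) (use a h m in linarith)+
    have f4: "cE A n (A) (2*A)" by (rule cE_S) (use a h m in linarith)+
    have b0: "A<n" using a h m by linarith
    have b1: "2*A<n" using a h m by linarith
    have b2: "A\<noteq>0" using a h m by linarith
    have b3: "A\<noteq>d" using a h m by linarith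
    have b4: "2*A\<noteq>0" using a h m by linarith
    have b5: "2*A\<noteq>d" using a h m by linarith
    have b6: "A\<noteq>2*A" using a h m by linarith
    show ?thesis using b0 b1 b2 b3 b4 b5 b6 f0 f1 f2 f3 f4 by (intro exI[of _ "A"] exI[of _ "2*A"] conjI) (assumption+)
  qed
  have c3: ?thesis if h: "4*A\<le>d \<and> 2*d\<le>n"
  proof -
    have f0: "cE A n (0) (2*A-1)" by (rule cE_S) (use a h m in linarith)+
    have f1: "cE A n (d) (2*A-1)" by (subst cE_sym, rule cE_S) (use a h m in linarith)+
    have f2: "cE A n (0) (3*A-1)" by (rule cE_S) (use a h m in linarith)+
    have f3: "cE A n (d) (3*A-1)" by (subst cE_sym, rule cE_S) (use a h m in linarith)+
    have f4: "cE A n (2*A-1) (3*A-1)" by (rule cE_S) (use a h m in linarith)+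
    have b0: "2*A-1<n" using a h m by linarith
    have b1: "3*A-1<n" using a h m by linarith
    have b2: "2*A-1\<noteq>0" using a h m by linarith
    have b3: "2*A-1\<noteq>d" using a h m by linarith
    have b4: "3*A-1\<noteq>0" using a h m by linarith
    have b5: "3*A-1\<noteq>d" using a h m by linarith
    have b6: "2*A-1\<noteq>3*A-1" using a h m by linarith
    show ?thesis using b0 b1 b2 b3 b4 b5 b6 f0 f1 f2 f3 f4 by (intro exI[of _ "2*A-1"] exI[of _ "3*A-1"] conjI) (assumption+)
  qed
  have c4: ?thesis if h: "n+1 \<le> d+4*A \<and> d+3*A\<le>n"
  proof -
    have f0: "cE A n (0) (m+2*A)" by (rule cE_L) (use a h m in linarith)+
    have f1: "cE A n (d) (m+2*A)" by (rule cE_S) (use a h m in linarith)+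
    have f2: "cE A n (0) (m+A)" by (rule cE_L) (use a h m in linarith)+
    have f3: "cE A n (d) (m+A)" by (rule cE_S) (use a h m in linarith)+
    have f4: "cE A n (m+2*A) (m+A)" by (subst cE_sym, rule cE_S) (use a h m in linarith)+
    have b0: "m+2*A<n" using a h m by linarith
    have b1: "m+A<n" using a h m by linarith
    have b2: "m+2*A\<noteq>0" using a h m by linarith
    have b3: "m+2*A\<noteq>d" using a h m by linarith
    have b4: "m+A\<noteq>0" using a h m by linarith
    have b5: "m+A\<noteq>d" using a h m by linarith
    have b6: "m+2*A\<noteq>m+A" using a h m by linarith
    show ?thesis using b0 b1 b2 b3 b4 b5 b6 f0 f1 f2 f3 f4 by (intro exI[of _ "m+2*A"] exI[of _ "m+A"] conjI) (assumption+)
  qed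
  have c5: ?thesis if h: "n\<le>2*d \<and> d+4*A\<le>n"
  proof -
    have f0: "cE A n (0) (m+A+1)" by (rule cE_L) (use a h m in linarith)+
    have f1: "cE A n (d) (m+A+1)" by (rule cE_S) (use a h m in linarith)+
    have f2: "cE A n (0) (m+1)" by (rule cE_L) (use a h m in linarith)+
    have f3: "cE A n (d) (m+1)" by (rule cE_S) (use a h m in linarith)+
    have f4: "cE A n (m+A+1) (m+1)" by (subst cE_sym, rule cE_S) (use a h m in linarith)+
    have b0: "m+A+1<n" using a h m by linarith
    have b1: "m+1<n" using a h m by linarith
    have b2: "m+A+1\<noteq>0" using a h m by linarith
    have b3: "m+A+1\<noteq>d" using a h m by linarith
    have b4: "m+1\<noteq>0" using a h m by linarith
    have b5: "m+1\<noteq>d" using a h m by linarith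
    have b6: "m+A+1\<noteq>m+1" using a h m by linarith
    show ?thesis using b0 b1 b2 b3 b4 b5 b6 f0 f1 f2 f3 f4 by (intro exI[of _ "m+A+1"] exI[of _ "m+1"] conjI) (assumption+)
  qed
  have "d<A \<or> n<d+A \<or> (3*A \<le> d \<and> d<4*A) \<or> (4*A\<le>d \<and> 2*d\<le>n) \<or> (n+1 \<le> d+4*A \<and> d+3*A\<le>n) \<or> (n\<le>2*d \<and> d+4*A\<le>n)"
    using assms unfolding okd_def by arith
  then show ?thesis using c0 c1 c2 c3 c4 c5 by blast
qed



lemma cE_simple:
  assumes "1\<le>A" "8*A \<le> n+2"
  shows "simple_graph {0..<n} (cE A n)"
proof -
  have "\<not> cE A n v v" for v using assms unfolding cE_def okd_def by simp
  then show ?thesis unfolding simple_graph_def using cE_sym[of A n] by (auto simp: cE_def)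
qed

lemma rot_back:
  fixes x n w :: nat
  assumes "x < n" "w < n"
  shows "((w + (n - x)) mod n + x) mod n = w"
proof -
  have "((w + (n - x)) mod n + x) mod n = (w + (n - x) + x) mod n" by (rule mod_add_left_eq)
  also have "w + (n - x) + x = w + n" using assms by simp
  finally show ?thesis using assms by simp
qed

lemma rot_inj:
  fixes k n u v :: nat
  assumes "k<n" "u<n" "v<n" "(u+k) mod n = (v+k) mod n"
  shows "u = v"
proof -
  have "(u+k) mod n = (if u+k<n then u+k else u+k-n)" "(v+k) mod n = (if v+k<n then v+k else v+k-n)"
    using assms mod_if_lt by auto
  then show ?thesis using assms(4) assms(1-3) by (auto split: if_splits)
qed

lemma cE_deg:
  assumes "x < n"
  shows "degree {0..<n} (cE A n) x = degree {0..<n} (cE A n) 0"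
proof -
  let ?f = "\<lambda>u. (u + x) mod n"
  have n0: "0 < n" using assms by simp
  have img: "{u \<in> {0..<n}. cE A n x u} = ?f ` {u \<in> {0..<n}. cE A n 0 u}"
  proof
    show "?f ` {u \<in> {0..<n}. cE A n 0 u} \<subseteq> {u \<in> {0..<n}. cE A n x u}"
    proof
      fix w assume "w \<in> ?f ` {u \<in> {0..<n}. cE A n 0 u}"
      then obtain u where u: "u < n" "cE A n 0 u" "w = ?f u" by auto
      have "cE A n ((0+x) mod n) ((u+x) mod n) = cE A n 0 u" using cE_rt[OF assms n0 u(1)] by simp
      then show "w \<in> {u \<in> {0..<n}. cE A n x u}" using u assms n0 by simp
    qed
  next
    show "{u \<in> {0..<n}. cE A n x u} \<subseteq> ?f ` {u \<in> {0..<n}. cE A n 0 u}"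
    proof
      fix w assume w: "w \<in> {u \<in> {0..<n}. cE A n x u}"
      define u where "u = (w + (n - x)) mod n"
      have un: "u < n" using n0 unfolding u_def by simp
      have fu: "?f u = w" using rot_back[OF assms, of w] w unfolding u_def by simp
      have "cE A n ((0+x) mod n) ((u+x) mod n) = cE A n 0 u" using cE_rt[OF assms n0 un] by simp
      then have "cE A n 0 u" using fu w assms by simp
      then have "u \<in> {u \<in> {0..<n}. cE A n 0 u}" using un by simp
      then show "w \<in> ?f ` {u \<in> {0..<n}. cE A n 0 u}" by (rule rev_image_eqI[where f="?f", OF _ fu[symmetric]])
    qed
  qed
  have inj: "inj_on ?f {u \<in> {0..<n}. cE A n 0 u}"
  proof (rule inj_onI)
    fix a b assume "a \<in> {u \<in> {0..<n}. cE A n 0 u}" "b \<in> {u \<in> {0..<n}. cE A n 0 u}" "?f a = ?f b"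
    then show "a = b" using rot_inj[OF assms, of a b] by simp
  qed
  show ?thesis unfolding degree_def img by (rule card_image[OF inj])
qed

lemma cE_regular: "regular {0..<n} (cE A n)"
  unfolding regular_def
proof (intro exI ballI)
  fix v assume "v \<in> {0..<n}"
  then show "degree {0..<n} (cE A n) v = degree {0..<n} (cE A n) 0" by (intro cE_deg) simp
qed

lemma cE_sat:
  assumes "1\<le>A" "8*A \<le> n+2" "n+3 \<le> 10*A" "x<n" "y<n" "x\<noteq>y" "\<not> cE A n x y"
  shows "has_K4 {0..<n} (add_edge (cE A n) x y)"
proof -
  have n0: "0<n" using assms by simp
  define d where "d = (y + (n - x)) mod n"
  have dn: "d < n" using n0 unfolding d_def by simp
  have dy: "(d + x) mod n = y" using rot_back[OF assms(4,5)] unfolding d_def by simp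
  have x0: "(0 + x) mod n = x" using assms by simp
  have d0: "0 < d" using dy x0 assms(6) by (metis gr0I)
  have "cE A n 0 d = cE A n x y" using cE_rt[OF assms(4) n0 dn] dy x0 by simp
  then have "\<not> okd A n d" using assms(7) dn unfolding cE_def by simp
  then obtain z w where zw: "z<n" "w<n" "z\<noteq>0" "z\<noteq>d" "w\<noteq>0" "w\<noteq>d" "z\<noteq>w" "cE A n 0 z" "cE A n d z" "cE A n 0 w" "cE A n d w" "cE A n z w"
    using sat0[OF assms(1-3) d0 dn] by blast
  define z' where "z' = (z + x) mod n"
  define w' where "w' = (w + x) mod n"
  have rt: "cE A n ((a+x) mod n) ((b+x) mod n) = cE A n a b" if "a<n" "b<n" for a b
    using cE_rt[OF assms(4) that] .
  have inj: "(a+x) mod n \<noteq> (b+x) mod n" if "a<n" "b<n" "a\<noteq>b" for a b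
    using rot_inj[OF assms(4) that(1,2)] that(3) by blast
  let ?E = "add_edge (cE A n) x y"
  have sym: "\<forall>u v. ?E u v \<longrightarrow> ?E v u" unfolding add_edge_def using cE_sym by blast
  have e1: "cE A n x z'" "cE A n y z'" "cE A n x w'" "cE A n y w'" "cE A n z' w'"
    using rt[of 0 z] rt[of d z] rt[of 0 w] rt[of d w] rt[of z w] zw dn n0 x0 dy
    unfolding z'_def w'_def by auto
  have ne: "x \<noteq> z'" "x \<noteq> w'" "y \<noteq> z'" "y \<noteq> w'" "z' \<noteq> w'"
    using inj[of 0 z] inj[of 0 w] inj[of d z] inj[of d w] inj[of z w] zw dn n0 x0 dy
    unfolding z'_def w'_def by auto
  have mem: "z' \<in> {0..<n}" "w' \<in> {0..<n}" unfolding z'_def w'_def using n0 by auto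
  show ?thesis
    apply (rule K4_intro[of x _ y z' w'])
    using assms(4,5,6) mem ne e1 sym by (auto simp: add_edge_def)
qed

lemma cE_main:
  assumes "1\<le>A" "8*A \<le> n+2" "n+3 \<le> 10*A"
  shows "simple_graph {0..<n} (cE A n) \<and> regular {0..<n} (cE A n) \<and> K4_saturated {0..<n} (cE A n)"
  using cE_simple[OF assms(1,2)] cE_regular cE_K4free[OF assms] cE_sat[OF assms]
  unfolding K4_saturated_def by auto



definition E8 :: "nat \<Rightarrow> nat \<Rightarrow> bool" where
  "E8 u v \<longleftrightarrow> u<8 \<and> v<8 \<and> ((u<3 \<and> 3\<le>v) \<or> (v<3 \<and> 3\<le>u) \<or>
     (3\<le>u \<and> 3\<le>v \<and> (u = v+1 \<or> v = u+1 \<or> (u=3 \<and> v=7) \<or> (u=7 \<and> v=3))))"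

lemma E8_sym: "E8 u v = E8 v u" unfolding E8_def by auto

lemma E8_simple: "simple_graph {0..<8} E8"
  unfolding simple_graph_def using E8_sym by (auto simp: E8_def)

lemma E8_K4free: "\<not> has_K4 {0..<8} E8"
proof
  assume "has_K4 {0..<8} E8"
  then obtain a b c d where H: "a<b" "b<c" "c<d" "d<8" "E8 a b" "E8 a c" "E8 a d" "E8 b c" "E8 b d" "E8 c d"
    using K4_sorted[of "{0..<8}" E8 8] by auto
  have h1: "3 \<le> b" using H(1,5) unfolding E8_def by auto
  have h2: "c = b+1 \<or> (b=3 \<and> c=7)" using H(2,8) h1 unfolding E8_def by auto
  have h3: "d = c+1 \<or> (c=3 \<and> d=7)" using H(3,10) h1 H(2) unfolding E8_def by auto
  have h4: "d = b+1 \<or> (b=3 \<and> d=7)" using H(2,3,9) h1 unfolding E8_def by auto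
  show False using h2 h3 h4 H(1-4) by (elim disjE conjE; linarith)
qed

definition cn :: "nat \<Rightarrow> nat \<Rightarrow> nat" where
  "cn x y = (if x+y = 8 then 4 else if x+y = 10 then (if x=3 \<or> y=3 then 7 else 5)
     else if x+y = 12 then 6 else if x+y = 9 then 7 else 3)"

lemma add_edge_mono: "E u v \<Longrightarrow> add_edge E x y u v"
  unfolding add_edge_def by simp

lemma E8_sat:
  assumes "x<8" "y<8" "x\<noteq>y" "\<not> E8 x y"
  shows "has_K4 {0..<8} (add_edge E8 x y)"
proof -
  let ?E = "add_edge E8 x y"
  have sym: "\<forall>u v. ?E u v \<longrightarrow> ?E v u" unfolding add_edge_def using E8_sym by blast
  have exy: "?E x y" unfolding add_edge_def by simp
  show ?thesis
  proof (cases "x<3 \<and> y<3")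
    case True
    have e: "E8 x 3" "E8 x 4" "E8 y 3" "E8 y 4" "E8 3 4" using True unfolding E8_def by simp_all
    show ?thesis
      by (rule K4_intro[of x _ y 3 4]; (rule add_edge_mono, rule e(1))?; (rule add_edge_mono, rule e(2))?;
          (rule add_edge_mono, rule e(3))?; (rule add_edge_mono, rule e(4))?; (rule add_edge_mono, rule e(5))?;
          (rule exy)?; (rule sym)?; use True assms in simp)
  next
    case False
    have xy: "3 \<le> x" "3 \<le> y" using False assms(1,2,4) unfolding E8_def by auto
    have xs: "x=3 \<or> x=4 \<or> x=5 \<or> x=6 \<or> x=7" using xy assms(1) by arith
    have ys: "y=3 \<or> y=4 \<or> y=5 \<or> y=6 \<or> y=7" using xy assms(2) by arith
    have c: "E8 x (cn x y) \<and> E8 y (cn x y) \<and> 3 \<le> cn x y \<and> cn x y < 8"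
      using xs ys assms(3,4) by (elim disjE) (simp_all add: E8_def cn_def)
    have ne: "cn x y \<noteq> x" "cn x y \<noteq> y" using c unfolding E8_def by auto
    have e: "E8 x 0" "E8 y 0" "E8 0 (cn x y)" using xy assms(1,2) c unfolding E8_def by auto
    show ?thesis
      by (rule K4_intro[of x _ y 0 "cn x y"]; (rule add_edge_mono, rule e(1))?; (rule add_edge_mono, rule e(2))?;
          (rule add_edge_mono, rule e(3))?; (rule add_edge_mono, use c in blast)?;
          (rule exy)?; (rule sym)?; use c ne xy assms in simp)
  qed
qed


lemma E8_deg_aux: "{u \<in> {0..<8}. E8 v u} = set (filter (E8 v) [0..<8])" by auto


lemma E8_deg: "v < 8 \<Longrightarrow> degree {0..<8} E8 v = 5"
proof -
  assume v: "v < 8"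
  have "v=0 \<or> v=1 \<or> v=2 \<or> v=3 \<or> v=4 \<or> v=5 \<or> v=6 \<or> v=7" using v by arith
  then show ?thesis unfolding degree_def E8_deg_aux by (elim disjE) (simp_all add: upt_rec E8_def)
qed


lemma param_exists:
  fixes n :: nat
  assumes "n > 0" "n \<noteq> 8" "n mod 8 = 6 \<or> n mod 8 = 0 \<or> n mod 17 = 0"
  shows "\<exists>A. 1\<le>A \<and> 8*A \<le> n+2 \<and> n+3 \<le> 10*A"
proof -
  from assms(3) consider "n mod 8 = 6" | "n mod 8 = 0" | "n mod 17 = 0" by metis
  then show ?thesis
  proof cases
    case 1
    define q where "q = n div 8"
    have q: "n = 8*q + 6" using 1 unfolding q_def by (metis div_mult_mod_eq mult.commute)
    show ?thesis by (intro exI[of _ "q+1"] conjI) (simp_all add: q)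
  next
    case 2
    define q where "q = n div 8"
    have q: "n = 8*q" using 2 unfolding q_def by (metis div_mult_mod_eq mult.commute add_0_right)
    have "q \<noteq> 0" "q \<noteq> 1" using q assms(1,2) by auto
    then have "q \<ge> 2" by linarith
    show ?thesis by (intro exI[of _ "q"] conjI) (use q \<open>q \<ge> 2\<close> in simp_all)
  next
    case 3
    define q where "q = n div 17"
    have q: "n = 17*q" using 3 unfolding q_def by (metis div_mult_mod_eq mult.commute add_0_right)
    have "q \<ge> 1" using q assms(1) by (cases q) auto
    show ?thesis by (intro exI[of _ "2*q"] conjI) (use q \<open>q \<ge> 1\<close> in simp_all)
  qed
qed

theorem proposition4p1:
  fixes n :: nat
  assumes "n > 0"
    and "n mod 8 = 6 \<or> n mod 8 = 0 \<or> n mod 17 = 0"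
  shows "\<exists>E :: nat \<Rightarrow> nat \<Rightarrow> bool. simple_graph {0..<n} E \<and> regular {0..<n} E \<and> K4_saturated {0..<n} E"
proof (cases "n = 8")
  case True
  have r: "regular {0..<8} E8" unfolding regular_def by (intro exI[of _ 5] ballI) (simp add: E8_deg)
  have s: "K4_saturated {0..<8} E8" unfolding K4_saturated_def
  proof (intro conjI ballI impI)
    show "\<not> has_K4 {0..<8} E8" by (rule E8_K4free)
  next
    fix x y assume "x \<in> {0..<8::nat}" "y \<in> {0..<8::nat}" "x \<noteq> y \<and> \<not> E8 x y"
    then show "has_K4 {0..<8} (add_edge E8 x y)" by (intro E8_sat) auto
  qed
  have "simple_graph {0..<8} E8 \<and> regular {0..<8} E8 \<and> K4_saturated {0..<8} E8"
    using E8_simple r s by blast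
  then show ?thesis unfolding True by (rule exI[of _ E8])
next
  case False
  obtain A where A: "1\<le>A" "8*A \<le> n+2" "n+3 \<le> 10*A" using param_exists[OF assms(1) False assms(2)] by blast
  show ?thesis by (rule exI[of _ "cE A n"]) (rule cE_main[OF A])
qed

end
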